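(* Let $X,Y$ be connected FDSs with $[X]_0=[Y]_0$. If $\widetilde{X}=\widetilde{Y}$ (as forests, up to isomorphism), then $X=Y$.
   Context: A finite dynamical system (FDS) is a function $A:S_A\to S_A$ on a finite set, considered up to isomorphism of functional graphs (arcs $x\to A(x)$); it is connected if its functional graph is weakly connected. Write $A^{\circ m}$ for the $m$-fold iterate of $A$. A state $s$ is a cycle state if $A^{\circ m}(s)=s$ for some $m>0$. The depth of a state is $0$ for cycle states and $\operatorname{depth}(A(s))+1$ otherwise; $[A]_0$ is the restriction of $A$ to its cycle states. The unrolling $\widetilde{A}$ of $A$ is the forest whose vertex set is $\{(s,k)\in S_A\times\mathbb{N}: A^{\circ k}(s)\text{ is a cycle state}\}$, with an arc $(s,k)\to(A(s),k-1)$ for each such vertex with $k\ge1$; its roots are the vertices $(a,0)$ with $a$ a cycle state (so it is a disjoint union of one infinite rooted in-tree per cycle state). *)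

theory Defs
  imports Main
begin

text \<open>A finite dynamical system is represented by a finite carrier set S and a map
  f with f ` S \<subseteq> S (values of f outside S are irrelevant).\<close>

definition is_fds :: "'a set \<Rightarrow> ('a \<Rightarrow> 'a) \<Rightarrow> bool" where
  "is_fds S f \<longleftrightarrow> finite S \<and> (\<forall>x\<in>S. f x \<in> S)"

definition fds_iso :: "'a set \<Rightarrow> ('a \<Rightarrow> 'a) \<Rightarrow> 'b set \<Rightarrow> ('b \<Rightarrow> 'b) \<Rightarrow> bool" where
  "fds_iso S f T g \<longleftrightarrow> (\<exists>h. bij_betw h S T \<and> (\<forall>x\<in>S. h (f x) = g (h x)))"

definition fds_arcs :: "'a set \<Rightarrow> ('a \<Rightarrow> 'a) \<Rightarrow> ('a \<times> 'a) set" where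
  "fds_arcs S f = {(x, f x) | x. x \<in> S}"

definition fds_connected :: "'a set \<Rightarrow> ('a \<Rightarrow> 'a) \<Rightarrow> bool" where
  "fds_connected S f \<longleftrightarrow>
     (\<forall>x\<in>S. \<forall>y\<in>S. (x, y) \<in> (fds_arcs S f \<union> (fds_arcs S f)\<inverse>)\<^sup>*)"

definition cycle_state :: "'a set \<Rightarrow> ('a \<Rightarrow> 'a) \<Rightarrow> 'a \<Rightarrow> bool" where
  "cycle_state S f s \<longleftrightarrow> s \<in> S \<and> (\<exists>m>0. (f ^^ m) s = s)"

text \<open>[A]_0: restriction of A to its cycle states.\<close>
definition cycle_states :: "'a set \<Rightarrow> ('a \<Rightarrow> 'a) \<Rightarrow> 'a set" where
  "cycle_states S f = {s. cycle_state S f s}"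

definition unroll_vertices :: "'a set \<Rightarrow> ('a \<Rightarrow> 'a) \<Rightarrow> ('a \<times> nat) set" where
  "unroll_vertices S f = {(s, k). s \<in> S \<and> cycle_state S f ((f ^^ k) s)}"

definition unroll_arcs :: "'a set \<Rightarrow> ('a \<Rightarrow> 'a) \<Rightarrow> (('a \<times> nat) \<times> ('a \<times> nat)) set" where
  "unroll_arcs S f = {((s, k), (f s, k - 1)) | s k. (s, k) \<in> unroll_vertices S f \<and> k \<ge> 1}"

definition digraph_iso :: "'v set \<Rightarrow> ('v \<times> 'v) set \<Rightarrow> 'w set \<Rightarrow> ('w \<times> 'w) set \<Rightarrow> bool" where
  "digraph_iso V E W F \<longleftrightarrow>
     (\<exists>h. bij_betw h V W \<and> (\<forall>u\<in>V. \<forall>v\<in>V. (u, v) \<in> E \<longleftrightarrow> (h u, h v) \<in> F))"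

definition unroll_iso :: "'a set \<Rightarrow> ('a \<Rightarrow> 'a) \<Rightarrow> 'b set \<Rightarrow> ('b \<Rightarrow> 'b) \<Rightarrow> bool" where
  "unroll_iso S f T g \<longleftrightarrow>
     digraph_iso (unroll_vertices S f) (unroll_arcs S f) (unroll_vertices T g) (unroll_arcs T g)"

end

theory Submission
  imports Defs
begin


lemma fds_funpow_in: "is_fds S f \<Longrightarrow> s \<in> S \<Longrightarrow> (f ^^ n) s \<in> S"
  by (induction n) (auto simp: is_fds_def)

lemma funpow_comm: "(f ^^ m) ((f ^^ n) x) = (f ^^ n) ((f ^^ m) x)"
  by (metis add.commute comp_apply funpow_add)

lemma funpow_period: "(f ^^ m) c = c \<Longrightarrow> (f ^^ (m * j)) c = c"
proof (induction j)
  case 0 then show ?case by simp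
next
  case (Suc j)
  have "(f ^^ (m * Suc j)) c = (f ^^ m) ((f ^^ (m * j)) c)"
    by (simp add: funpow_add)
  then show ?case using Suc by simp
qed

lemma cyc_f: "is_fds S f \<Longrightarrow> cycle_state S f c \<Longrightarrow> cycle_state S f (f c)"
  unfolding cycle_state_def is_fds_def
  by (metis funpow_swap1)

lemma cyc_funpow: "is_fds S f \<Longrightarrow> cycle_state S f c \<Longrightarrow> cycle_state S f ((f ^^ n) c)"
  by (induction n) (auto intro: cyc_f)

lemma eventually_cyc:
  assumes X: "is_fds S f" and u: "u \<in> S"
  shows "cycle_state S f ((f ^^ card S) u)"
proof -
  have fin: "finite S" using X by (simp add: is_fds_def)
  have sub: "(\<lambda>i. (f ^^ i) u) ` {0..card S} \<subseteq> S" using fds_funpow_in[OF X u] by auto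
  have "\<not> inj_on (\<lambda>i. (f ^^ i) u) {0..card S}"
  proof
    assume "inj_on (\<lambda>i. (f ^^ i) u) {0..card S}"
    then have "card {0..card S} \<le> card S" using card_inj_on_le[OF _ sub fin] by blast
    then show False by simp
  qed
  then obtain i j where ij: "i \<in> {0..card S}" "j \<in> {0..card S}" "i \<noteq> j" "(f ^^ i) u = (f ^^ j) u"
    unfolding inj_on_def by blast
  then obtain i j where ij: "i \<le> card S" "i < j" "(f ^^ i) u = (f ^^ j) u"
    by (metis atLeastAtMost_iff linorder_neqE_nat)
  have "(f ^^ (j - i)) ((f ^^ i) u) = (f ^^ j) u"
    using ij by (metis funpow_add le_add_diff_inverse2 less_imp_le comp_apply)
  then have "cycle_state S f ((f ^^ i) u)"
    using ij fds_funpow_in[OF X u] unfolding cycle_state_def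
    by (metis zero_less_diff)
  then have "cycle_state S f ((f ^^ (card S - i)) ((f ^^ i) u))"
    using cyc_funpow[OF X] by blast
  moreover have "(f ^^ (card S - i)) ((f ^^ i) u) = (f ^^ card S) u"
    using ij by (metis funpow_add le_add_diff_inverse2 comp_apply)
  ultimately show ?thesis by simp
qed

lemma verts_iff: "(s, k) \<in> unroll_vertices S f \<longleftrightarrow> s \<in> S \<and> cycle_state S f ((f ^^ k) s)"
  by (simp add: unroll_vertices_def)

lemma arcs_iff: "((s, k), (s', k')) \<in> unroll_arcs S f \<longleftrightarrow>
   (s, k) \<in> unroll_vertices S f \<and> k \<ge> 1 \<and> s' = f s \<and> k' = k - 1"
  by (auto simp: unroll_arcs_def)

lemma root_lemma:
  assumes Y: "is_fds T g"
    and hbij: "bij_betw h (unroll_vertices S f) (unroll_vertices T g)"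
    and harc: "\<forall>u\<in>unroll_vertices S f. \<forall>v\<in>unroll_vertices S f.
        (u, v) \<in> unroll_arcs S f \<longleftrightarrow> (h u, h v) \<in> unroll_arcs T g"
    and aS: "cycle_state S f a"
  shows "\<exists>b. h (a, 0) = (b, 0)"
proof -
  have aV: "(a, 0) \<in> unroll_vertices S f" using aS by (simp add: verts_iff cycle_state_def)
  obtain y k where hy: "h (a, 0) = (y, k)" by (cases "h (a, 0)")
  have yW: "(y, k) \<in> unroll_vertices T g" using hy aV hbij by (metis bij_betwE)
  have "k = 0"
  proof (rule ccontr)
    assume k: "k \<noteq> 0"
    have arc: "((y, k), (g y, k - 1)) \<in> unroll_arcs T g" using yW k by (simp add: arcs_iff)
    have "(g y, k - 1) \<in> unroll_vertices T g"
    proof -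
      have "(g ^^ (k - 1)) (g y) = (g ^^ k) y" using k
        by (metis Suc_pred' bot_nat_0.not_eq_extremum comp_apply funpow_Suc_right)
      then show ?thesis using yW Y by (auto simp: verts_iff is_fds_def)
    qed
    then obtain v where v: "v \<in> unroll_vertices S f" "h v = (g y, k - 1)"
      using hbij by (metis bij_betw_iff_bijections)
    then have "((a, 0), v) \<in> unroll_arcs S f" using harc aV arc hy by auto
    then show False by (cases v) (simp add: arcs_iff)
  qed
  then show ?thesis using hy by blast
qed

lemma digraph_iso_sym: "digraph_iso V E W F \<Longrightarrow> digraph_iso W F V E"
proof -
  assume "digraph_iso V E W F"
  then obtain h where hb: "bij_betw h V W" and ha: "\<forall>u\<in>V. \<forall>v\<in>V. (u, v) \<in> E \<longleftrightarrow> (h u, h v) \<in> F"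
    unfolding digraph_iso_def by blast
  define h' where "h' = the_inv_into V h"
  have b': "bij_betw h' W V" unfolding h'_def by (rule bij_betw_the_inv_into[OF hb])
  have inv: "\<And>y. y \<in> W \<Longrightarrow> h (h' y) = y" unfolding h'_def
    by (meson f_the_inv_into_f_bij_betw hb)
  have "\<forall>u\<in>W. \<forall>v\<in>W. (u, v) \<in> F \<longleftrightarrow> (h' u, h' v) \<in> E"
  proof (intro ballI)
    fix u v assume u: "u \<in> W" and v: "v \<in> W"
    have "h' u \<in> V" "h' v \<in> V" using b' u v by (auto dest: bij_betwE)
    then show "(u, v) \<in> F \<longleftrightarrow> (h' u, h' v) \<in> E" using ha inv u v by metis
  qed
  then show ?thesis using b' unfolding digraph_iso_def by blast
qed

lemma fds_iso_sym:
  assumes "fds_iso A f B g" and cl: "\<forall>x\<in>A. f x \<in> A"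
  shows "fds_iso B g A f"
proof -
  obtain h where hb: "bij_betw h A B" and hc: "\<forall>x\<in>A. h (f x) = g (h x)"
    using assms unfolding fds_iso_def by blast
  define h' where "h' = the_inv_into A h"
  have b': "bij_betw h' B A" unfolding h'_def by (rule bij_betw_the_inv_into[OF hb])
  have inv: "\<And>y. y \<in> B \<Longrightarrow> h (h' y) = y" unfolding h'_def
    by (meson f_the_inv_into_f_bij_betw hb)
  have inv2: "\<And>x. x \<in> A \<Longrightarrow> h' (h x) = x" unfolding h'_def
    by (meson bij_betw_imp_inj_on hb the_inv_into_f_f)
  have "\<forall>y\<in>B. h' (g y) = f (h' y)"
  proof
    fix y assume y: "y \<in> B"
    have x: "h' y \<in> A" using b' y by (auto dest: bij_betwE)
    have "g y = h (f (h' y))" using hc x inv y by metis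
    then show "h' (g y) = f (h' y)" using inv2 cl x by metis
  qed
  then show ?thesis using b' unfolding fds_iso_def by blast
qed




context
  fixes S :: "'a set" and f :: "'a \<Rightarrow> 'a" and T :: "'b set" and g :: "'b \<Rightarrow> 'b"
    and a :: 'a and b :: 'b and h :: "'a \<times> nat \<Rightarrow> 'b \<times> nat" and hc :: "'a \<Rightarrow> 'b"
    and p :: nat and psi :: "nat \<Rightarrow> 'a \<Rightarrow> 'b" and K :: "'a \<Rightarrow> nat" and phi :: "'a \<Rightarrow> 'b"
  assumes X: "is_fds S f" and Y: "is_fds T g" and conX: "fds_connected S f"
    and aS: "cycle_state S f a"
    and hbij: "bij_betw h (unroll_vertices S f) (unroll_vertices T g)"
    and harc: "\<forall>u\<in>unroll_vertices S f. \<forall>v\<in>unroll_vertices S f.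
        (u, v) \<in> unroll_arcs S f \<longleftrightarrow> (h u, h v) \<in> unroll_arcs T g"
    and hcbij: "bij_betw hc (cycle_states S f) (cycle_states T g)"
    and hccom: "\<forall>x\<in>cycle_states S f. hc (f x) = g (hc x)"
    and hab: "h (a, 0) = (b, 0)"
    and p_def: "p = (LEAST m. 0 < m \<and> (f ^^ m) a = a)"
    and psi_def: "psi = (\<lambda>k s. fst (h (s, k)))"
    and K_def: "K = (\<lambda>s. LEAST k. (f ^^ k) s = a)"
    and phi_def: "phi = (\<lambda>s. psi (K s) s)"
begin

lemma a_in: "a \<in> S" using aS by (simp add: cycle_state_def)

lemma reach: assumes s: "s \<in> S" shows "\<exists>k. (f ^^ k) s = a"
proof -
  have "(a, s) \<in> (fds_arcs S f \<union> (fds_arcs S f)\<inverse>)\<^sup>*"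
    using conX a_in s unfolding fds_connected_def by blast
  then show ?thesis
  proof (induction rule: rtrancl_induct)
    case base
    then show ?case by (rule exI[of _ 0]) simp
  next
    case (step y z)
    then obtain k where k: "(f ^^ k) y = a" by blast
    show ?case
    proof (cases "(y, z) \<in> fds_arcs S f")
      case True
      then have z: "z = f y" by (auto simp: fds_arcs_def)
      show ?thesis
      proof (cases k)
        case 0
        then have ya: "y = a" using k by simp
        obtain m where m: "m > 0" "(f ^^ m) a = a" using aS by (auto simp: cycle_state_def)
        have "(f ^^ (m - 1)) (f a) = (f ^^ m) a" using m(1)
          by (metis Suc_pred' comp_apply funpow_Suc_right)
        then have "(f ^^ (m - 1)) z = a" using m z ya by simp
        then show ?thesis by blast
      next
        case (Suc k')
        then have "(f ^^ k') (f y) = a" using k by (simp add: funpow_swap1)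
        then show ?thesis using z by blast
      qed
    next
      case False
      then have "(z, y) \<in> fds_arcs S f" using step by auto
      then have y: "y = f z" by (auto simp: fds_arcs_def)
      have "(f ^^ Suc k) z = a" using k y by (simp add: funpow_swap1)
      then show ?thesis by blast
    qed
  qed
qed

lemma p_props: "0 < p" "(f ^^ p) a = a"
proof -
  obtain m where m: "m > 0" "(f ^^ m) a = a" using aS by (auto simp: cycle_state_def)
  then have "0 < p \<and> (f ^^ p) a = a" unfolding p_def by (metis (mono_tags, lifting) LeastI)
  then show "0 < p" "(f ^^ p) a = a" by auto
qed

lemma p_min: "0 < m \<Longrightarrow> m < p \<Longrightarrow> (f ^^ m) a \<noteq> a"
  unfolding p_def using not_less_Least by blast

lemma fpow_mult_p: "(f ^^ (j * p)) a = a"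
  using funpow_period[OF p_props(2), of j] by (simp add: mult.commute)

lemma X1: assumes c: "cycle_state S f c" shows "(f ^^ p) c = c"
proof -
  have cS: "c \<in> S" using c by (simp add: cycle_state_def)
  obtain k where k: "(f ^^ k) c = a" using reach[OF cS] by blast
  obtain m where m: "m > 0" "(f ^^ m) c = c" using c by (auto simp: cycle_state_def)
  have c1: "(f ^^ (m * k)) c = c" by (rule funpow_period[OF m(2)])
  have "m * k \<ge> k" using m(1) by simp
  then have "(f ^^ (m * k)) c = (f ^^ (m * k - k)) ((f ^^ k) c)"
    by (metis funpow_add le_add_diff_inverse2 comp_apply)
  then have ca: "c = (f ^^ (m * k - k)) a" using c1 k by simp
  have "(f ^^ p) c = (f ^^ (m * k - k)) ((f ^^ p) a)" using ca funpow_comm[where f=f and m=p and n="m * k - k" and x=a] by simp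
  then show ?thesis using p_props(2) ca by simp
qed

lemma X2: assumes c: "cycle_state S f c" and d: "0 < d" "(f ^^ d) c = c" shows "p dvd d"
proof -
  have cS: "c \<in> S" using c by (simp add: cycle_state_def)
  obtain k where k: "(f ^^ k) c = a" using reach[OF cS] by blast
  have da: "(f ^^ d) a = a" using funpow_comm[where f=f and m=d and n=k and x=c] k d(2) by simp
  have e: "d mod p + d div p * p = d" by simp
  have "(f ^^ d) a = (f ^^ (d mod p + d div p * p)) a" using e by simp
  also have "\<dots> = (f ^^ (d mod p)) ((f ^^ ((d div p) * p)) a)"
    by (simp only: funpow_add comp_apply)
  finally have "(f ^^ d) a = (f ^^ (d mod p)) ((f ^^ ((d div p) * p)) a)" .
  then have "(f ^^ (d mod p)) a = a" using da fpow_mult_p by simp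
  moreover have "d mod p < p" using p_props(1) by simp
  ultimately have "d mod p = 0" using p_min by (meson bot_nat_0.not_eq_extremum)
  then show ?thesis by auto
qed

lemma hc_iter: "cycle_state S f c \<Longrightarrow> hc ((f ^^ n) c) = (g ^^ n) (hc c)"
proof (induction n)
  case 0 then show ?case by simp
next
  case (Suc n)
  have "cycle_state S f ((f ^^ n) c)" using cyc_funpow[OF X Suc.prems] .
  then show ?case using hccom Suc by (simp add: cycle_states_def)
qed

lemma Y1: assumes y: "cycle_state T g y" shows "(g ^^ p) y = y"
proof -
  obtain c where c: "c \<in> cycle_states S f" "y = hc c" using hcbij y
    by (metis bij_betw_imp_surj_on imageE mem_Collect_eq cycle_states_def)
  then have cc: "cycle_state S f c" by (simp add: cycle_states_def)
  show ?thesis using hc_iter[OF cc, of p] X1[OF cc] c by simp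
qed

lemma Y1': "cycle_state T g y \<Longrightarrow> (g ^^ (j * p)) y = y"
  using funpow_period[OF Y1, of y j] by (simp add: mult.commute)

lemma Y2: assumes y: "cycle_state T g y" and d: "0 < d" "(g ^^ d) y = y" shows "p dvd d"
proof -
  obtain c where c: "c \<in> cycle_states S f" "y = hc c" using hcbij y
    by (metis bij_betw_imp_surj_on imageE mem_Collect_eq cycle_states_def)
  then have cc: "cycle_state S f c" by (simp add: cycle_states_def)
  have "hc ((f ^^ d) c) = hc c" using hc_iter[OF cc, of d] d c by simp
  moreover have "(f ^^ d) c \<in> cycle_states S f" using cyc_funpow[OF X cc] by (simp add: cycle_states_def)
  ultimately have "(f ^^ d) c = c" using hcbij c(1) by (meson bij_betw_imp_inj_on inj_onD)
  then show ?thesis using X2[OF cc d(1)] by blast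
qed

lemma b_cyc: "cycle_state T g b"
proof -
  have "(a, 0) \<in> unroll_vertices S f" using aS by (simp add: verts_iff cycle_state_def)
  then have "(b, 0) \<in> unroll_vertices T g" using hab hbij by (metis bij_betwE)
  then show ?thesis by (simp add: verts_iff)
qed

lemma level: "s \<in> S \<Longrightarrow> (f ^^ k) s = a \<Longrightarrow>
   h (s, k) = (psi k s, k) \<and> psi k s \<in> T \<and> (g ^^ k) (psi k s) = b"
proof (induction k arbitrary: s)
  case 0
  then show ?case using hab b_cyc by (simp add: psi_def cycle_state_def)
next
  case (Suc k)
  have fs: "f s \<in> S" using X Suc.prems by (simp add: is_fds_def)
  have fk: "(f ^^ k) (f s) = a" using Suc.prems by (simp add: funpow_swap1)
  note IH = Suc.IH[OF fs fk]
  have v1: "(s, Suc k) \<in> unroll_vertices S f" using Suc.prems aS by (simp add: verts_iff)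
  have v2: "(f s, k) \<in> unroll_vertices S f" using fs fk aS by (simp add: verts_iff)
  have "((s, Suc k), (f s, k)) \<in> unroll_arcs S f" using v1 by (simp add: arcs_iff)
  then have arc: "(h (s, Suc k), h (f s, k)) \<in> unroll_arcs T g" using harc v1 v2 by blast
  obtain t j where tj: "h (s, Suc k) = (t, j)" by (cases "h (s, Suc k)")
  have "(t, j) \<in> unroll_vertices T g \<and> j \<ge> 1 \<and> psi k (f s) = g t \<and> k = j - 1"
  proof -
    have arc2: "((t, j), (psi k (f s), k)) \<in> unroll_arcs T g" using arc tj IH by simp
    show ?thesis using arcs_iff[THEN iffD1, OF arc2] by blast
  qed
  then have j: "j = Suc k" and tW: "(t, j) \<in> unroll_vertices T g" and gt: "psi k (f s) = g t" by auto
  have pt: "psi (Suc k) s = t" using tj j by (simp add: psi_def)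
  have "(g ^^ Suc k) t = (g ^^ k) (g t)" by (simp add: funpow_swap1)
  then show ?case using tj j pt tW gt IH by (simp add: verts_iff)
qed

lemma step: assumes s: "s \<in> S" and sk: "(f ^^ Suc k) s = a"
  shows "g (psi (Suc k) s) = psi k (f s)"
proof -
  have fs: "f s \<in> S" using X s by (simp add: is_fds_def)
  have fk: "(f ^^ k) (f s) = a" using sk by (simp add: funpow_swap1)
  have v1: "(s, Suc k) \<in> unroll_vertices S f" using s sk aS by (simp add: verts_iff)
  have v2: "(f s, k) \<in> unroll_vertices S f" using fs fk aS by (simp add: verts_iff)
  have "((s, Suc k), (f s, k)) \<in> unroll_arcs S f" using v1 by (simp add: arcs_iff)
  then have arc: "(h (s, Suc k), h (f s, k)) \<in> unroll_arcs T g" using harc v1 v2 by blast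
  then show ?thesis using level[OF s sk] level[OF fs fk] by (simp add: arcs_iff)
qed

lemma iter: "s \<in> S \<Longrightarrow> (f ^^ (k + i)) s = a \<Longrightarrow> (g ^^ i) (psi (k + i) s) = psi k ((f ^^ i) s)"
proof (induction i arbitrary: s)
  case 0 then show ?case by simp
next
  case (Suc i)
  have fs: "f s \<in> S" using X Suc.prems by (simp add: is_fds_def)
  have fk: "(f ^^ (k + i)) (f s) = a" using Suc.prems by (simp add: funpow_swap1)
  have st: "g (psi (Suc (k + i)) s) = psi (k + i) (f s)"
    using step[OF Suc.prems(1)] Suc.prems(2) by simp
  have "(g ^^ Suc i) (psi (k + Suc i) s) = (g ^^ i) (g (psi (Suc (k + i)) s))"
    by (simp add: funpow_swap1)
  also have "\<dots> = psi k ((f ^^ i) (f s))" using st Suc.IH[OF fs fk] by simp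
  also have "\<dots> = psi k ((f ^^ Suc i) s)" by (simp add: funpow_swap1)
  finally show ?case .
qed

lemma M: "psi (j * p) a = b"
proof -
  define n where "n = card T"
  define L where "L = j * p + n * p"
  have La: "(f ^^ L) a = a" unfolding L_def using fpow_mult_p[of "j + n"]
    by (simp add: add_mult_distrib)
  have uT: "psi L a \<in> T" using level[OF a_in La] by blast
  have "(g ^^ (n * p)) (psi L a) = psi (j * p) ((f ^^ (n * p)) a)"
    using iter[OF a_in, of "j * p" "n * p"] La unfolding L_def by simp
  then have eq: "(g ^^ (n * p)) (psi L a) = psi (j * p) a" using fpow_mult_p by simp
  have "n * p \<ge> n" using p_props(1) by simp
  then have "(g ^^ (n * p)) (psi L a) = (g ^^ (n * p - n)) ((g ^^ n) (psi L a))"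
    by (metis funpow_add le_add_diff_inverse2 comp_apply)
  moreover have "cycle_state T g ((g ^^ n) (psi L a))" unfolding n_def
    by (rule eventually_cyc[OF Y uT])
  moreover have "cycle_state T g ((g ^^ (n * p - n)) ((g ^^ n) (psi L a)))"
    using calculation(2) by (rule cyc_funpow[OF Y])
  ultimately have tc: "cycle_state T g (psi (j * p) a)" using eq by simp
  have "(g ^^ (j * p)) (psi (j * p) a) = b" using level[OF a_in fpow_mult_p] by blast
  then show ?thesis using Y1'[OF tc] by simp
qed

lemma K_spec: "s \<in> S \<Longrightarrow> (f ^^ K s) s = a"
  unfolding K_def using reach by (metis (mono_tags, lifting) LeastI)

lemma K_min: "(f ^^ j) s = a \<Longrightarrow> K s \<le> j"
  unfolding K_def by (simp add: Least_le)

lemma K_eq: "(f ^^ k) s = a \<Longrightarrow> (\<forall>j<k. (f ^^ j) s \<noteq> a) \<Longrightarrow> K s = k"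
  unfolding K_def by (metis (mono_tags, lifting) Least_equality not_less)

lemma K_a: "K a = 0" using K_min[of 0 a] by simp

lemma phi_a: "phi a = b" using K_a hab by (simp add: phi_def psi_def)

lemma phi_in: "s \<in> S \<Longrightarrow> phi s \<in> T"
  using level K_spec by (simp add: phi_def)

lemma phi_com: assumes s: "s \<in> S" shows "phi (f s) = g (phi s)"
proof (cases "K s")
  case 0
  then have sa: "s = a" using K_spec[OF s] by simp
  have fa: "(f ^^ (p - 1)) (f a) = a" using p_props
    by (metis Suc_pred' comp_apply funpow_Suc_right)
  have "\<forall>j<p - 1. (f ^^ j) (f a) \<noteq> a"
  proof (intro allI impI)
    fix j assume "j < p - 1"
    then show "(f ^^ j) (f a) \<noteq> a" using p_min[of "Suc j"] by (simp add: funpow_swap1)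
  qed
  then have Kf: "K (f a) = p - 1" using K_eq fa by blast
  have sp: "Suc (p - 1) = p" using p_props by simp
  have "g (psi p a) = psi (p - 1) (f a)" using step[OF a_in, of "p - 1"] sp p_props by simp
  moreover have "psi p a = b" using M[of 1] by simp
  ultimately show ?thesis using sa Kf phi_a by (simp add: phi_def)
next
  case (Suc k)
  have sk: "(f ^^ Suc k) s = a" using K_spec[OF s] Suc by simp
  have fk: "(f ^^ k) (f s) = a" using sk by (simp add: funpow_swap1)
  have "\<forall>j<k. (f ^^ j) (f s) \<noteq> a"
  proof (intro allI impI)
    fix j assume j: "j < k"
    show "(f ^^ j) (f s) \<noteq> a"
    proof
      assume "(f ^^ j) (f s) = a"
      then have "(f ^^ Suc j) s = a" by (simp add: funpow_swap1)
      then have "K s \<le> Suc j" by (rule K_min)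
      then show False using j Suc by simp
    qed
  qed
  then have Kf: "K (f s) = k" using K_eq fk by blast
  show ?thesis using step[OF s sk] Kf Suc by (simp add: phi_def)
qed

lemma phi_iter: "s \<in> S \<Longrightarrow> phi ((f ^^ n) s) = (g ^^ n) (phi s)"
  by (induction n) (auto simp: phi_com fds_funpow_in[OF X])

lemma inj_aux: assumes s: "s \<in> S" and s': "s' \<in> S" and eq: "phi s = phi s'" and le: "K s \<le> K s'"
  shows "s = s'"
proof -
  define k where "k = K s"
  define d where "d = K s' - k"
  define s'' where "s'' = (f ^^ k) s'"
  have s''S: "s'' \<in> S" unfolding s''_def using fds_funpow_in[OF X s'] .
  have "phi s'' = (g ^^ k) (phi s)" unfolding s''_def using phi_iter[OF s'] eq by simp
  also have "\<dots> = phi ((f ^^ k) s)" using phi_iter[OF s] by simp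
  also have "\<dots> = b" using K_spec[OF s] phi_a k_def by simp
  finally have ph: "phi s'' = b" .
  have dk: "d + k = K s'" using le unfolding d_def k_def by simp
  have sd: "(f ^^ d) s'' = a" unfolding s''_def
    using K_spec[OF s'] dk by (metis funpow_add comp_apply)
  have "\<forall>j<d. (f ^^ j) s'' \<noteq> a"
  proof (intro allI impI)
    fix j assume j: "j < d"
    show "(f ^^ j) s'' \<noteq> a"
    proof
      assume "(f ^^ j) s'' = a"
      then have "(f ^^ (j + k)) s' = a" unfolding s''_def by (simp add: funpow_add)
      then have "K s' \<le> j + k" by (rule K_min)
      then show False using j dk by simp
    qed
  qed
  then have Kd: "K s'' = d" using K_eq sd by blast
  show ?thesis
  proof (cases "d = 0")
    case True
    then have kk: "K s' = k" using dk by simp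
    have "h (s, k) = (psi k s, k)" using level[OF s] K_spec[OF s] k_def by blast
    moreover have "h (s', k) = (psi k s', k)" using level[OF s' K_spec[OF s']] kk by simp
    moreover have "psi k s = psi k s'" using eq kk k_def by (simp add: phi_def)
    ultimately have hh: "h (s, k) = h (s', k)" by simp
    have v1: "(s, k) \<in> unroll_vertices S f" using s K_spec[OF s] aS k_def by (simp add: verts_iff)
    have v2: "(s', k) \<in> unroll_vertices S f" using s' K_spec[OF s'] aS kk by (simp add: verts_iff)
    have "(s, k) = (s', k)" by (rule inj_onD[OF bij_betw_imp_inj_on[OF hbij] hh v1 v2])
    then show ?thesis by simp
  next
    case False
    have lv: "h (s'', d) = (psi d s'', d)" "(g ^^ d) (psi d s'') = b" using level[OF s''S sd] by auto
    have pd: "psi d s'' = b" using ph Kd by (simp add: phi_def)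
    then have "(g ^^ d) b = b" using lv by simp
    then have "p dvd d" using Y2[OF b_cyc] False by blast
    then obtain j where dj: "d = j * p" by (auto simp: dvd_def mult.commute)
    have "h (a, d) = (psi d a, d)" using level[OF a_in] fpow_mult_p dj by blast
    then have hh: "h (a, d) = h (s'', d)" using M dj lv pd by simp
    have v1: "(a, d) \<in> unroll_vertices S f" using a_in fpow_mult_p dj aS by (simp add: verts_iff)
    have v2: "(s'', d) \<in> unroll_vertices S f" using s''S sd aS by (simp add: verts_iff)
    have "(a, d) = (s'', d)" by (rule inj_onD[OF bij_betw_imp_inj_on[OF hbij] hh v1 v2])
    then have "a = s''" by simp
    then show ?thesis using Kd K_a False by simp
  qed
qed

lemma core_ex: "\<exists>\<phi>. inj_on \<phi> S \<and> \<phi> ` S \<subseteq> T \<and> (\<forall>x\<in>S. \<phi> (f x) = g (\<phi> x))"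
proof (intro exI conjI)
  show "inj_on phi S"
  proof (rule inj_onI)
    fix x y assume x: "x \<in> S" and y: "y \<in> S" and e: "phi x = phi y"
    show "x = y"
    proof (cases "K x \<le> K y")
      case True then show ?thesis using inj_aux[OF x y e] by blast
    next
      case False then show ?thesis using inj_aux[OF y x e[symmetric]] by simp
    qed
  qed
  show "phi ` S \<subseteq> T" using phi_in by auto
  show "\<forall>x\<in>S. phi (f x) = g (phi x)" using phi_com by auto
qed

end


lemma core_thm:
  fixes S :: "'a set" and f :: "'a \<Rightarrow> 'a" and T :: "'b set" and g :: "'b \<Rightarrow> 'b"
  assumes X: "is_fds S f" and Y: "is_fds T g" and conX: "fds_connected S f"
    and ci: "fds_iso (cycle_states S f) f (cycle_states T g) g"
    and ui: "unroll_iso S f T g"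
  shows "\<exists>\<phi>. inj_on \<phi> S \<and> \<phi> ` S \<subseteq> T \<and> (\<forall>x\<in>S. \<phi> (f x) = g (\<phi> x))"
proof (cases "S = {}")
  case True then show ?thesis by auto
next
  case False
  then obtain s where s: "s \<in> S" by blast
  define a where "a = (f ^^ card S) s"
  have aS: "cycle_state S f a" unfolding a_def by (rule eventually_cyc[OF X s])
  obtain h where hbij: "bij_betw h (unroll_vertices S f) (unroll_vertices T g)"
    and harc: "\<forall>u\<in>unroll_vertices S f. \<forall>v\<in>unroll_vertices S f.
        (u, v) \<in> unroll_arcs S f \<longleftrightarrow> (h u, h v) \<in> unroll_arcs T g"
    using ui unfolding unroll_iso_def digraph_iso_def by blast
  obtain hc where hcbij: "bij_betw hc (cycle_states S f) (cycle_states T g)"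
    and hccom: "\<forall>x\<in>cycle_states S f. hc (f x) = g (hc x)"
    using ci unfolding fds_iso_def by blast
  obtain b where hab: "h (a, 0) = (b, 0)" using root_lemma[OF Y hbij harc aS] by blast
  show ?thesis
    by (rule core_ex[OF X Y conX aS hbij harc hcbij hccom hab refl refl refl refl])
qed

theorem mainTheorem13:
  fixes S :: "'a set" and f :: "'a \<Rightarrow> 'a" and T :: "'b set" and g :: "'b \<Rightarrow> 'b"
  assumes "is_fds S f" and "is_fds T g"
    and "fds_connected S f" and "fds_connected T g"
    and "fds_iso (cycle_states S f) f (cycle_states T g) g"
    and "unroll_iso S f T g"
  shows "fds_iso S f T g"
proof -
  obtain \<phi> where inj: "inj_on \<phi> S" and im: "\<phi> ` S \<subseteq> T" and com: "\<forall>x\<in>S. \<phi> (f x) = g (\<phi> x)"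
    using core_thm[OF assms(1,2,3,5,6)] by blast
  have cl: "\<forall>x\<in>cycle_states S f. f x \<in> cycle_states S f"
    using cyc_f[OF assms(1)] by (simp add: cycle_states_def)
  have ci': "fds_iso (cycle_states T g) g (cycle_states S f) f"
    by (rule fds_iso_sym[OF assms(5) cl])
  have ui': "unroll_iso T g S f"
    using assms(6) unfolding unroll_iso_def by (rule digraph_iso_sym)
  obtain \<psi> where inj': "inj_on \<psi> T" and im': "\<psi> ` T \<subseteq> S"
    using core_thm[OF assms(2,1,4) ci' ui'] by blast
  have finS: "finite S" and finT: "finite T" using assms(1,2) by (auto simp: is_fds_def)
  have "card T \<le> card S" by (rule card_inj_on_le[OF inj' im' finS])
  moreover have "card (\<phi> ` S) = card S" by (rule card_image[OF inj])
  ultimately have "\<phi> ` S = T" using card_subset_eq[OF finT im] card_mono[OF finT im] by simp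
  then have "bij_betw \<phi> S T" using inj by (simp add: bij_betw_def)
  then show ?thesis using com unfolding fds_iso_def by blast
qed

end
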